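(* Let $\eta,\lambda\in\mathbb{C}$, let $k\ge1$, and let $\tau_1,\dots,\tau_k$ be positive integers. Then in $\mathcal{F}_{\eta,\lambda}$, $$L_{-\tau_1}L_{-\tau_2}\cdots L_{-\tau_k}|\eta\rangle=(\tau_k)(\tau_k+\tau_{k-1})\cdots(\tau_k+\tau_{k-1}+\cdots+\tau_2)\,\big[\eta+(\tau_k-1)\lambda\big]\,\alpha_{-(\tau_1+\cdots+\tau_k)}|\eta\rangle+R,$$ where $R$ is a linear combination of monomials $\alpha_{-\sigma_1}\cdots\alpha_{-\sigma_j}|\eta\rangle$ with $j\ge2$. (For $k=1$ the product of partial sums is empty and equals $1$.) Consequently, if $\Delta h$ is a negative integer and $U=\sum_{|\tau|=-\Delta h}A_\tau L_{-\tau_1}\cdots L_{-\tau_{\ell(\tau)}}$ with $\tau_1\ge\cdots\ge\tau_{\ell(\tau)}$, then the coefficient of $\alpha_{\Delta h}|\eta\rangle$ in the monomial basis expansion of $U|\eta\rangle$ is $$-\frac{1}{\Delta h}\sum_{|\tau|=-\Delta h}[\tau]!\,\big[\eta+(\tau_{\ell(\tau)}-1)\lambda\big]A_\tau.$$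
   Context: The Heisenberg modes satisfy $[\alpha_m,\alpha_n]=m\delta_{m,-n}$. $\mathcal{F}_{\eta,\lambda}$ is the Fock space generated by $|\eta\rangle$, with $\alpha_n|\eta\rangle=0$ for $n>0$ and $\alpha_0|\eta\rangle=\eta|\eta\rangle$. It has basis the monomials $\alpha_{-\sigma_1}\cdots\alpha_{-\sigma_j}|\eta\rangle$ ($\sigma$ a partition) and carries the Virasoro action $$L_n=\tfrac12\sum_k:\alpha_k\alpha_{n-k}:-\lambda(n+1)\alpha_n,$$ where normal ordering places positive-index modes to the right. For a partition $\tau=(\tau_1\ge\cdots\ge\tau_\ell>0)$, define $[\tau]!=(\tau_1+\cdots+\tau_\ell)(\tau_2+\cdots+\tau_\ell)\cdots(\tau_\ell)$. *)

theory Defs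
  imports Complex_Main "HOL-Library.Multiset"
begin

text \<open>Vectors of the Fock space F_{eta,lambda}: coefficient functions on the monomial basis.
  The basis monomial alpha_{-s1}...alpha_{-sj}|eta> (s a partition) is indexed by the
  multiset of its parts.  Heisenberg modes with distinct negative indices commute,
  so the order of the factors is irrelevant.\<close>
type_synonym fvec = "nat multiset \<Rightarrow> complex"

text \<open>Heisenberg mode alpha_n acting on F_{eta,lambda}
  ([alpha_m, alpha_n] = m delta_{m,-n}, alpha_n|eta> = 0 for n>0, alpha_0 = eta).\<close>
definition alpha :: "complex \<Rightarrow> int \<Rightarrow> fvec \<Rightarrow> fvec" where
  "alpha \<eta> n v = (\<lambda>m.
     if n < 0 then (if nat (- n) \<in># m then v (m - {#nat (- n)#}) else 0)
     else if n = 0 then \<eta> * v m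
     else of_int n * of_nat (count m (nat n) + 1) * v (m + {#nat n#}))"

definition nord :: "complex \<Rightarrow> int \<Rightarrow> int \<Rightarrow> fvec \<Rightarrow> fvec" where
  "nord \<eta> j l v =
     (if 0 < j \<and> l \<le> 0 then alpha \<eta> l (alpha \<eta> j v) else alpha \<eta> j (alpha \<eta> l v))"

text \<open>For each basis index m only finitely many k give a nonzero contribution, so the
  infinite sum is the (finite) sum over the nonzero terms.\<close>
definition vir :: "complex \<Rightarrow> complex \<Rightarrow> int \<Rightarrow> fvec \<Rightarrow> fvec" where
  "vir \<eta> lam n v = (\<lambda>m.
     (1/2) * (\<Sum>k\<in>{k::int. nord \<eta> k (n - k) v m \<noteq> 0}. nord \<eta> k (n - k) v m)
     - lam * of_int (n + 1) * alpha \<eta> n v m)"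

definition vac :: fvec where
  "vac = (\<lambda>m. if m = {#} then 1 else 0)"

definition Lmon :: "complex \<Rightarrow> complex \<Rightarrow> nat list \<Rightarrow> fvec \<Rightarrow> fvec" where
  "Lmon \<eta> lam ts v = foldr (\<lambda>t w. vir \<eta> lam (- int t) w) ts v"

definition partitions_of :: "nat \<Rightarrow> nat list set" where
  "partitions_of N = {ts. sorted_wrt (\<ge>) ts \<and> (\<forall>t\<in>set ts. 0 < t) \<and> sum_list ts = N}"

definition bfact :: "nat list \<Rightarrow> nat" where
  "bfact ts = (\<Prod>i<length ts. \<Sum>j\<in>{i..<length ts}. ts ! j)"

end

theory Submission
  imports Defs
begin

lemma nord_single:
  assumes "s > 0"
  shows "nord \<eta> k (- int s - k) w {#M#} =
     (if (k = 0 \<or> k = - int s) \<and> M = s then \<eta> * w {#} else 0)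
   + (if (k = int M - int s \<or> k = - int M) \<and> M > s then of_nat (M - s) * w {#M - s#} else 0)"
  using assms
  unfolding nord_def alpha_def
  apply (auto simp: of_nat_diff)
   apply (rule arg_cong[where f=w]; simp; linarith)
  apply (rule arg_cong[where f=w]; simp; linarith)
  done

lemma nord_empty:
  assumes "s > 0"
  shows "nord \<eta> k (- int s - k) w {#} = 0"
  using assms
  unfolding nord_def alpha_def
  by auto

lemma sum_nz: "finite S \<Longrightarrow> (\<And>k. k \<notin> S \<Longrightarrow> f k = 0) \<Longrightarrow> sum f {k. f k \<noteq> 0} = sum f S"
  by (rule sum.mono_neutral_left) auto

lemma vir_empty:
  assumes "s > 0"
  shows "vir \<eta> lam (- int s) w {#} = 0"
  using assms unfolding vir_def by (simp add: nord_empty alpha_def)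

lemma vir_single:
  assumes s: "s > 0"
  shows "vir \<eta> lam (- int s) w {#M#} =
     (if M = s then (\<eta> + (of_nat s - 1) * lam) * w {#} else 0)
   + (if M > s then of_nat (M - s) * w {#M - s#} else 0)"
proof -
  define f where "f k = nord \<eta> k (- int s - k) w {#M#}" for k
  have fk: "f k = (if (k = 0 \<or> k = - int s) \<and> M = s then \<eta> * w {#} else 0)
   + (if (k = int M - int s \<or> k = - int M) \<and> M > s then of_nat (M - s) * w {#M - s#} else 0)" for k
    unfolding f_def by (rule nord_single[OF s])
  have S: "sum f {k. f k \<noteq> 0} = sum f {0, - int s, int M - int s, - int M}"
    by (rule sum_nz) (auto simp: fk)
  have A: "alpha \<eta> (- int s) w {#M#} = (if M = s then w {#} else 0)"
    using s unfolding alpha_def by auto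
  have "sum f {0, - int s, int M - int s, - int M} =
     (if M = s then 2 * \<eta> * w {#} else 0) + (if M > s then 2 * of_nat (M - s) * w {#M - s#} else 0)"
  proof (cases "M = s")
    case True
    then have "{0, - int s, int M - int s, - int M} = {0, - int s}" by auto
    then show ?thesis using True s by (simp add: fk)
  next
    case False
    show ?thesis
    proof (cases "M > s")
      case True
      then have "{0, - int s, int M - int s, - int M} = {0, - int s} \<union> {int M - int s, - int M}" by auto
      moreover have "sum f {0, - int s} = 0" using False True s by (simp add: fk)
      moreover have "sum f {int M - int s, - int M} = 2 * of_nat (M - s) * w {#M - s#}"
        using False True s by (simp add: fk)
      moreover have "sum f ({0, - int s} \<union> {int M - int s, - int M}) = sum f {0, - int s} + sum f {int M - int s, - int M}"
        by (rule sum.union_disjoint) (use True s in auto)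
      ultimately show ?thesis using True s False by simp
    next
      case F2: False
      then show ?thesis using False by (simp add: fk)
    qed
  qed
  then have "vir \<eta> lam (- int s) w {#M#} = (1/2) * ((if M = s then 2 * \<eta> * w {#} else 0) + (if M > s then 2 * of_nat (M - s) * w {#M - s#} else 0))
      - lam * of_int (- int s + 1) * (if M = s then w {#} else 0)"
    unfolding vir_def f_def[symmetric] S A by simp
  then show ?thesis using s
    by (cases "M = s"; cases "s < M"; simp add: of_nat_diff algebra_simps)
qed

definition pp :: "nat list \<Rightarrow> nat" where
  "pp ts = (\<Prod>i\<in>{1..<length ts}. \<Sum>j\<in>{i..<length ts}. ts ! j)"

lemma pp_Cons: assumes False: "ts \<noteq> []" shows "pp (t # ts) = sum_list ts * pp ts"
proof -
  have "pp (t # ts) = (\<Prod>i\<in>{0..<length ts}. \<Sum>j\<in>{Suc i..<Suc (length ts)}. (t # ts) ! j)"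
    unfolding pp_def by (simp add: prod.atLeast_Suc_lessThan_Suc_shift del: prod.op_ivl_Suc)
  also have "\<dots> = (\<Prod>i\<in>{0..<length ts}. \<Sum>j\<in>{i..<length ts}. ts ! j)"
    by (simp add: sum.atLeast_Suc_lessThan_Suc_shift del: sum.op_ivl_Suc)
  also have "{0..<length ts} = insert 0 {1..<length ts}" using False by auto
  also have "(\<Prod>i\<in>insert 0 {1..<length ts}. \<Sum>j\<in>{i..<length ts}. ts ! j) = sum_list ts * pp ts"
    by (simp add: pp_def sum_list_sum_nth)
  finally show ?thesis .
qed

lemma bfact_pp: "ts \<noteq> [] \<Longrightarrow> bfact ts = sum_list ts * pp ts"
proof -
  assume "ts \<noteq> []"
  then have "{..<length ts} = insert 0 {1..<length ts}" by auto
  then show ?thesis unfolding bfact_def pp_def by (simp add: sum_list_sum_nth)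
qed

lemma Lmon_Cons: "Lmon \<eta> lam (t # ts) v = vir \<eta> lam (- int t) (Lmon \<eta> lam ts v)"
  by (simp add: Lmon_def)

lemma Lmon_small:
  "(\<forall>t\<in>set ts. 0 < t) \<Longrightarrow> Lmon \<eta> lam ts vac {#} = (if ts = [] then 1 else 0) \<and>
     (\<forall>M. Lmon \<eta> lam ts vac {#M#} = (if ts \<noteq> [] \<and> M = sum_list ts
        then of_nat (pp ts) * (\<eta> + (of_nat (last ts) - 1) * lam) else 0))"
proof (induction ts)
  case Nil
  then show ?case by (simp add: Lmon_def vac_def)
next
  case (Cons t ts)
  then have t: "t > 0" and IH: "Lmon \<eta> lam ts vac {#} = (if ts = [] then 1 else 0) \<and>
     (\<forall>M. Lmon \<eta> lam ts vac {#M#} = (if ts \<noteq> [] \<and> M = sum_list ts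
        then of_nat (pp ts) * (\<eta> + (of_nat (last ts) - 1) * lam) else 0))" by auto
  show ?case
  proof (intro conjI allI)
    show "Lmon \<eta> lam (t # ts) vac {#} = (if t # ts = [] then 1 else 0)"
      by (simp add: Lmon_Cons vir_empty t)
  next
    fix M
    show "Lmon \<eta> lam (t # ts) vac {#M#} = (if t # ts \<noteq> [] \<and> M = sum_list (t # ts)
        then of_nat (pp (t # ts)) * (\<eta> + (of_nat (last (t # ts)) - 1) * lam) else 0)"
    proof (cases "ts = []")
      case True
      then show ?thesis using IH t by (simp add: Lmon_Cons vir_single pp_def)
    next
      case False
      then have "sum_list ts > 0" using Cons.prems
        by (cases ts) auto
      then show ?thesis using IH t False
        by (auto simp add: Lmon_Cons vir_single pp_Cons of_nat_diff)
    qed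
  qed
qed

theorem mainTheorem4:
  fixes \<eta> lam :: complex
  shows
  "(\<forall>ts::nat list. ts \<noteq> [] \<and> (\<forall>t\<in>set ts. 0 < t) \<longrightarrow>
      Lmon \<eta> lam ts vac {#sum_list ts#}
        = of_nat (\<Prod>i\<in>{1..<length ts}. \<Sum>j\<in>{i..<length ts}. ts ! j)
          * (\<eta> + (of_nat (last ts) - 1) * lam)
    \<and> (\<forall>m. size m \<le> 1 \<and> m \<noteq> {#sum_list ts#} \<longrightarrow> Lmon \<eta> lam ts vac m = 0))
   \<and> (\<forall>(\<Delta>h::int) (A :: nat list \<Rightarrow> complex). \<Delta>h < 0 \<longrightarrow>
      (\<Sum>ts\<in>partitions_of (nat (- \<Delta>h)). A ts * Lmon \<eta> lam ts vac {#nat (- \<Delta>h)#})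
        = - (1 / of_int \<Delta>h) *
          (\<Sum>ts\<in>partitions_of (nat (- \<Delta>h)).
             of_nat (bfact ts) * (\<eta> + (of_nat (last ts) - 1) * lam) * A ts))"
proof (intro conjI allI impI)
  fix ts :: "nat list"
  assume h: "ts \<noteq> [] \<and> (\<forall>t\<in>set ts. 0 < t)"
  note L = Lmon_small[OF conjunct2[OF h], of \<eta> lam]
  show "Lmon \<eta> lam ts vac {#sum_list ts#}
        = of_nat (\<Prod>i\<in>{1..<length ts}. \<Sum>j\<in>{i..<length ts}. ts ! j)
          * (\<eta> + (of_nat (last ts) - 1) * lam)"
    using L h by (simp add: pp_def)
  fix m :: "nat multiset"
  assume m: "size m \<le> 1 \<and> m \<noteq> {#sum_list ts#}"
  show "Lmon \<eta> lam ts vac m = 0"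
  proof (cases "size m = 0")
    case True then show ?thesis using L h by simp
  next
    case False
    then have "size m = 1" using m by linarith
    then obtain x where "m = {#x#}" using size_1_singleton_mset by blast
    then show ?thesis using L h m by auto
  qed
next
  fix \<Delta>h :: int and A :: "nat list \<Rightarrow> complex"
  assume d: "\<Delta>h < 0"
  let ?N = "nat (- \<Delta>h)"
  have "A ts * Lmon \<eta> lam ts vac {#?N#} = - (1 / of_int \<Delta>h) *
             (of_nat (bfact ts) * (\<eta> + (of_nat (last ts) - 1) * lam) * A ts)"
    if ts: "ts \<in> partitions_of ?N" for ts
  proof -
    from ts have s: "sum_list ts = ?N" and p: "\<forall>t\<in>set ts. 0 < t"
      unfolding partitions_of_def by auto
    have ne: "ts \<noteq> []" using s d by auto
    have E1: "Lmon \<eta> lam ts vac {#?N#} = of_nat (pp ts) * (\<eta> + (of_nat (last ts) - 1) * lam)"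
      using Lmon_small[OF p, of \<eta> lam] ne s by simp
    have E2: "of_nat (bfact ts) = (of_int (- \<Delta>h) :: complex) * of_nat (pp ts)"
      using bfact_pp[OF ne] s d by simp
    have "(of_int \<Delta>h :: complex) \<noteq> 0" using d by simp
    then show ?thesis unfolding E1 E2 by (simp add: field_simps)
  qed
  then show "(\<Sum>ts\<in>partitions_of ?N. A ts * Lmon \<eta> lam ts vac {#?N#}) = - (1 / of_int \<Delta>h) *
          (\<Sum>ts\<in>partitions_of ?N.
             of_nat (bfact ts) * (\<eta> + (of_nat (last ts) - 1) * lam) * A ts)"
    by (simp add: sum_distrib_left)
qed

end
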